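(* Let $F$ be a distribution function on $[0,1]$ with a positive, non-increasing, differentiable density $g$ and non-decreasing hazard ratio $g(x)/(1-F(x))$. Let $\{f_{i,j}\}$, $f_{i,j}=f_{j,i}$ ($1\le i\le j\le n$), be independent with distribution $F$. Call $I\subseteq[n]$ a K-set if $f_{i,j}\ge (f_{i,i}+f_{j,j})/2$ for all distinct $i,j\in I$. Say that $J\subseteq[n]$, $|J|\ge2$, supports a non-trivial local equilibrium if there exist $p_j>0$ ($j\in J$) with $\sum_{j\in J}p_j=1$ such that $\sum_{j\in J}f_{i,j}p_j$ is the same for all $i\in J$, and $\sum_{i,j\in J}f_{i,j}x_ix_j\le0$ for all real $\{x_i\}_{i\in J}$ with $\sum_{i\in J}x_i=0$. Let $r_n=\lceil 2\log_2 n\rceil$. Then for every $a>0$, for all sufficiently large $n$, with probability at least $1-n^{-a}$ there is no K-set $I$ of cardinality $\ge r_n$ such that no proper subset $J\subsetneq I$ with $|J|\ge2$ supports a non-trivial local equilibrium. *)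

theory Defs
  imports "HOL-Probability.Probability"
begin

definition cdf_of :: "(real \<Rightarrow> real) \<Rightarrow> real \<Rightarrow> real" where
  "cdf_of g x = integral {0..x} g"

text \<open>Index set of the independent entries f(i,j), i \<le> j, indices 0..n-1.\<close>
definition entry_idx :: "nat \<Rightarrow> (nat \<times> nat) set" where
  "entry_idx n = {(i, j). i \<le> j \<and> j < n}"

definition entries_space :: "(real \<Rightarrow> real) \<Rightarrow> nat \<Rightarrow> (nat \<times> nat \<Rightarrow> real) measure" where
  "entries_space g n = PiM (entry_idx n) (\<lambda>_. density lborel (\<lambda>x. ennreal (g x)))"

definition sym_mat :: "(nat \<times> nat \<Rightarrow> real) \<Rightarrow> nat \<Rightarrow> nat \<Rightarrow> real" where
  "sym_mat \<omega> i j = \<omega> (min i j, max i j)"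

definition is_Kset :: "(nat \<Rightarrow> nat \<Rightarrow> real) \<Rightarrow> nat set \<Rightarrow> bool" where
  "is_Kset f I \<longleftrightarrow> (\<forall>i\<in>I. \<forall>j\<in>I. i \<noteq> j \<longrightarrow> f i j \<ge> (f i i + f j j) / 2)"

definition supports_local_eq :: "(nat \<Rightarrow> nat \<Rightarrow> real) \<Rightarrow> nat set \<Rightarrow> bool" where
  "supports_local_eq f J \<longleftrightarrow> card J \<ge> 2 \<and>
     (\<exists>p :: nat \<Rightarrow> real. (\<forall>j\<in>J. p j > 0) \<and> (\<Sum>j\<in>J. p j) = 1 \<and>
        (\<exists>c. \<forall>i\<in>J. (\<Sum>j\<in>J. f i j * p j) = c) \<and>
        (\<forall>x :: nat \<Rightarrow> real. (\<Sum>i\<in>J. x i) = 0 \<longrightarrow>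
            (\<Sum>i\<in>J. \<Sum>j\<in>J. f i j * x i * x j) \<le> 0))"

definition r_n :: "nat \<Rightarrow> nat" where
  "r_n n = nat \<lceil>2 * log 2 (real n)\<rceil>"

definition bad_event :: "(real \<Rightarrow> real) \<Rightarrow> nat \<Rightarrow> (nat \<times> nat \<Rightarrow> real) set" where
  "bad_event g n = {\<omega> \<in> space (entries_space g n).
     \<exists>I \<subseteq> {0..<n}. card I \<ge> r_n n \<and> is_Kset (sym_mat \<omega>) I \<and>
        (\<forall>J. J \<subset> I \<and> card J \<ge> 2 \<longrightarrow> \<not> supports_local_eq (sym_mat \<omega>) J)}"

end

theory Submission
  imports Defs
begin

lemma antiD: "antimono_on A (g::real\<Rightarrow>real) \<Longrightarrow> x \<in> A \<Longrightarrow> y \<in> A \<Longrightarrow> x \<le> y \<Longrightarrow> g y \<le> g x"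
  by (simp add: monotone_on_def)

lemma g_meas:
  fixes g :: "real \<Rightarrow> real"
  assumes supp: "\<forall>x. x \<notin> {0..1} \<longrightarrow> g x = 0"
    and noninc: "antimono_on {0..1} g"
  shows "g \<in> borel_measurable borel"
proof -
  define f where "f x = - g (max 0 (min 1 x))" for x :: real
  have "mono f" unfolding mono_def f_def
    by (intro allI impI, simp, rule antiD[OF noninc]) auto
  then have fm: "f \<in> borel_measurable borel" by (rule borel_measurable_mono)
  have eq: "g = (\<lambda>x. indicator {0..1} x * (- f x))"
    by (rule ext) (auto simp: f_def indicator_def supp max_def min_def)
  show ?thesis unfolding eq using fm by measurable
qed

lemma g_prob:
  fixes g :: "real \<Rightarrow> real"
  assumes supp: "\<forall>x. x \<notin> {0..1} \<longrightarrow> g x = 0"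
    and pos: "\<forall>x\<in>{0<..<1}. g x > 0"
    and dens: "(g has_integral 1) {0..1}"
    and noninc: "antimono_on {0..1} g"
  shows "prob_space (density lborel (\<lambda>x. ennreal (g x)))"
proof (rule prob_spaceI)
  have gm: "g \<in> borel_measurable borel" using g_meas supp noninc by blast
  define g' where "g' x = max 0 (g x)" for x
  have nn: "0 \<le> g x" if "x \<in> {0..1} - {1}" for x
  proof (cases "x = 0")
    case True
    have "g (1/2) \<le> g 0" by (rule antiD[OF noninc]) auto
    moreover have "g (1/2) > 0" using pos by auto
    ultimately show ?thesis using True by simp
  next
    case False then show ?thesis using that pos by (auto intro: less_imp_le)
  qed
  have gi: "(g' has_integral 1) {0..1}"
    by (rule has_integral_spike[OF negligible_sing[of 1] _ dens]) (use nn in \<open>auto simp: g'_def\<close>)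
  have "(\<integral>\<^sup>+x. ennreal (g' x) * indicator {0..1} x \<partial>lborel) = ennreal 1"
    by (rule nn_integral_has_integral_lebesgue'[OF _ gi]) (simp add: g'_def)
  moreover have "\<And>x. ennreal (g' x) * indicator {0..1} x = ennreal (g x) * indicator UNIV x"
    by (auto simp: g'_def indicator_def supp max_def ennreal_neg)
  ultimately show "emeasure (density lborel (\<lambda>x. ennreal (g x))) (space (density lborel (\<lambda>x. ennreal (g x)))) = 1"
    using gm by (subst emeasure_density) auto
qed


lemma pair_bound0:
  fixes g :: "real \<Rightarrow> real"
  assumes gm: "g \<in> borel_measurable borel" and noninc: "antimono_on {0..1} g"
    and P: "prob_space (density lborel (\<lambda>x. ennreal (g x)))"
    and u: "u \<in> {0..1}" and v: "v \<in> {0..1}" and uv: "u \<le> v"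
  shows "measure (density lborel (\<lambda>x. ennreal (g x))) {(u+v)/2..v} \<le> 1/2"
proof -
  define M where "M = density lborel (\<lambda>x. ennreal (g x))"
  interpret P: prob_space M using P M_def by simp
  define m where "m = (u+v)/2"
  define h where "h = (v-u)/2"
  have sM[simp]: "sets M = sets borel" by (simp add: M_def)
  have em: "emeasure M A = (\<integral>\<^sup>+x. ennreal (g x) * indicator A x \<partial>lborel)" if "A \<in> sets borel" for A
    unfolding M_def using gm that by (subst emeasure_density) auto
  have "emeasure M {m..v} = (\<integral>\<^sup>+x. ennreal (g x) * indicator {m..v} x \<partial>lborel)" by (rule em) simp
  also have "\<dots> = (\<integral>\<^sup>+x. ennreal (g (h + 1 * x)) * indicator {m..v} (h + 1 * x) \<partial>lborel)"
    using nn_integral_real_affine[of "\<lambda>x. ennreal (g x) * indicator {m..v} x" 1 h] gm by simp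
  also have "\<dots> \<le> (\<integral>\<^sup>+x. ennreal (g x) * indicator {u..m} x \<partial>lborel)"
  proof (rule nn_integral_mono)
    fix x
    show "ennreal (g (h + 1 * x)) * indicator {m..v} (h + 1 * x) \<le> ennreal (g x) * indicator {u..m} x"
    proof (cases "h + x \<in> {m..v}")
      case True
      then have x: "x \<in> {u..m}" by (auto simp: m_def h_def field_simps)
      have "g (h + x) \<le> g x"
        by (rule antiD[OF noninc]) (use x True u v uv in \<open>auto simp: m_def h_def\<close>)
      then show ?thesis using True x by (auto simp: indicator_def intro: ennreal_leI)
    qed (auto simp: indicator_def)
  qed
  also have "\<dots> = emeasure M {u..m}" by (rule em[symmetric]) simp
  finally have le1: "measure M {m..v} \<le> measure M {u..m}"
    by (simp add: P.emeasure_eq_measure)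
  have "emeasure M {m} = (\<integral>\<^sup>+x. ennreal (g x) * indicator {m} x \<partial>lborel)" by (rule em) simp
  also have "\<dots> = 0"
    using AE_lborel_singleton[of m] gm by (subst nn_integral_0_iff_AE) (auto elim!: eventually_mono simp: indicator_def)
  finally have m0: "measure M {m} = 0" by (simp add: P.emeasure_eq_measure)
  have "measure M {m..v} = measure M ({m} \<union> {m<..v})"
    using uv by (intro arg_cong[where f="measure M"]) (auto simp: m_def)
  also have "\<dots> = measure M {m} + measure M {m<..v}"
    by (rule P.finite_measure_Union) auto
  finally have e1: "measure M {m..v} = measure M {m<..v}" using m0 by simp
  have "measure M {u..m} + measure M {m<..v} = measure M ({u..m} \<union> {m<..v})"
    by (rule P.finite_measure_Union[symmetric]) auto
  also have "\<dots> \<le> 1" by (rule P.prob_le_1)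
  finally show ?thesis using le1 e1 unfolding M_def m_def by simp
qed


definition Qs :: "real \<Rightarrow> real \<Rightarrow> real set" where
  "Qs u v = {y. u \<in> {0..1} \<and> v \<in> {0..1} \<and> (u+v)/2 \<le> y \<and> y \<le> max u v}"

lemma Qs_borel: "Qs u v \<in> sets borel"
proof -
  have "Qs u v = (if u \<in> {0..1} \<and> v \<in> {0..1} then {(u+v)/2..max u v} else {})"
    by (auto simp: Qs_def)
  then show ?thesis by simp
qed

definition Epair :: "nat set \<Rightarrow> (nat \<times> nat) set" where
  "Epair I = {(i,j). i \<in> I \<and> j \<in> I \<and> i < j}"

lemma E_sets:
  fixes M :: "real measure"
  assumes sM: "sets M = sets borel" and K: "finite K"
    and IK: "\<And>i j. i \<in> I \<Longrightarrow> j \<in> I \<Longrightarrow> i \<le> j \<Longrightarrow> (i,j) \<in> K" and fI: "finite I"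
  shows "{\<omega> \<in> space (PiM K (\<lambda>_. M)). \<forall>p\<in>Epair I. \<omega> p \<in> Qs (\<omega> (fst p, fst p)) (\<omega> (snd p, snd p))}
     \<in> sets (PiM K (\<lambda>_. M))"
proof (rule sets.sets_Collect_finite_All)
  show "finite (Epair I)" unfolding Epair_def
    by (rule finite_subset[OF _ finite_cartesian_product[OF fI fI]]) auto
  fix p assume p: "p \<in> Epair I"
  obtain i j where ij: "p = (i,j)" "i \<in> I" "j \<in> I" "i < j" using p by (auto simp: Epair_def)
  have comp: "(\<lambda>\<omega>. \<omega> k) \<in> borel_measurable (PiM K (\<lambda>_. M))" if "k \<in> K" for k
  proof -
    have "measurable (PiM K (\<lambda>_. M)) M = measurable (PiM K (\<lambda>_. M)) borel"
      by (rule measurable_cong_sets[OF refl sM])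
    then show ?thesis using measurable_component_singleton[OF that, of "\<lambda>_. M"] by simp
  qed
  define N where "N = PiM K (\<lambda>_. M)"
  have a: "(\<lambda>\<omega>. \<omega> (i,i)) \<in> borel_measurable N"
    and b: "(\<lambda>\<omega>. \<omega> (j,j)) \<in> borel_measurable N"
    and c: "(\<lambda>\<omega>. \<omega> (i,j)) \<in> borel_measurable N"
    using comp IK ij unfolding N_def by auto
  have ab: "(\<lambda>\<omega>. (\<omega> (i,i) + \<omega> (j,j)) / 2) \<in> borel_measurable N"
    using a b by (intro borel_measurable_divide borel_measurable_add) auto
  have z: "(\<lambda>\<omega>. 0::real) \<in> borel_measurable N" "(\<lambda>\<omega>. 1::real) \<in> borel_measurable N" by auto
  have "{\<omega> \<in> space (PiM K (\<lambda>_. M)). \<omega> p \<in> Qs (\<omega> (fst p, fst p)) (\<omega> (snd p, snd p))}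
     = {\<omega> \<in> space N. 0 \<le> \<omega> (i,i)} \<inter> {\<omega> \<in> space N. \<omega> (i,i) \<le> 1} \<inter>
       {\<omega> \<in> space N. 0 \<le> \<omega> (j,j)} \<inter> {\<omega> \<in> space N. \<omega> (j,j) \<le> 1} \<inter>
       {\<omega> \<in> space N. (\<omega> (i,i) + \<omega> (j,j)) / 2 \<le> \<omega> (i,j)} \<inter>
       ({\<omega> \<in> space N. \<omega> (i,j) \<le> \<omega> (i,i)} \<union> {\<omega> \<in> space N. \<omega> (i,j) \<le> \<omega> (j,j)})"
    by (auto simp: Qs_def ij N_def le_max_iff_disj)
  also have "\<dots> \<in> sets N"
    using borel_measurable_le[OF z(1) a] borel_measurable_le[OF a z(2)]
      borel_measurable_le[OF z(1) b] borel_measurable_le[OF b z(2)]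
      borel_measurable_le[OF ab c] borel_measurable_le[OF c a] borel_measurable_le[OF c b]
    by (intro sets.Int sets.Un) auto
  finally show "{\<omega> \<in> space (PiM K (\<lambda>_. M)). \<omega> p \<in> Qs (\<omega> (fst p, fst p)) (\<omega> (snd p, snd p))}
     \<in> sets (PiM K (\<lambda>_. M))" unfolding N_def .
qed


lemma E_bound:
  fixes M :: "real measure"
  assumes P: "prob_space M" and sM: "sets M = sets borel" and K: "finite K"
    and IK: "\<And>i j. i \<in> I \<Longrightarrow> j \<in> I \<Longrightarrow> i \<le> j \<Longrightarrow> (i,j) \<in> K" and fI: "finite I"
    and pb: "\<And>u v. measure M (Qs u v) \<le> 1/2"
  shows "emeasure (PiM K (\<lambda>_. M)) {\<omega> \<in> space (PiM K (\<lambda>_. M)). \<forall>p\<in>Epair I. \<omega> p \<in> Qs (\<omega> (fst p, fst p)) (\<omega> (snd p, snd p))}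
     \<le> (1/2) ^ card (Epair I)"
proof -
  define E where "E = {\<omega> \<in> space (PiM K (\<lambda>_. M)). \<forall>p\<in>Epair I. \<omega> p \<in> Qs (\<omega> (fst p, fst p)) (\<omega> (snd p, snd p))}"
  have Es: "E \<in> sets (PiM K (\<lambda>_. M))" unfolding E_def by (rule E_sets[OF sM K IK fI])
  define D where "D = (\<lambda>i. (i,i)) ` I"
  define J where "J = K - D"
  have KDJ: "K = D \<union> J" using IK by (auto simp: D_def J_def)
  have fD: "finite D" "finite J" using K KDJ by auto
  have DJ: "D \<inter> J = {}" by (auto simp: J_def)
  have OJ: "Epair I \<subseteq> J" using IK by (auto simp: Epair_def J_def D_def)
  have fO: "finite (Epair I)" using OJ fD finite_subset by blast
  interpret PP: product_prob_space "\<lambda>_::nat\<times>nat. M" J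
    using P by (simp add: product_prob_space_def product_prob_space_axioms_def product_sigma_finite_def prob_space_imp_sigma_finite)
  interpret PD: product_prob_space "\<lambda>_::nat\<times>nat. M" D
    using P by (simp add: product_prob_space_def product_prob_space_axioms_def product_sigma_finite_def prob_space_imp_sigma_finite)
  have fmM: "finite_measure M" using P by (simp add: prob_space_def)
  have "emeasure (PiM K (\<lambda>_. M)) E = (\<integral>\<^sup>+\<omega>. indicator E \<omega> \<partial>PiM K (\<lambda>_. M))"
    using Es by simp
  also have "\<dots> = (\<integral>\<^sup>+x. (\<integral>\<^sup>+y. indicator E (merge D J (x,y)) \<partial>PiM J (\<lambda>_. M)) \<partial>PiM D (\<lambda>_. M))"
    unfolding KDJ using Es KDJ by (intro PP.product_nn_integral_fold DJ fD) auto
  also have "\<dots> \<le> (\<integral>\<^sup>+x. (1/2) ^ card (Epair I) \<partial>PiM D (\<lambda>_. M))"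
  proof (rule nn_integral_mono)
    fix x assume x: "x \<in> space (PiM D (\<lambda>_. M))"
    define B where "B = {y \<in> space (PiM J (\<lambda>_. M)). \<forall>p\<in>Epair I. y p \<in> Qs (x (fst p, fst p)) (x (snd p, snd p))}"
    have "(\<integral>\<^sup>+y. indicator E (merge D J (x,y)) \<partial>PiM J (\<lambda>_. M)) \<le> (\<integral>\<^sup>+y. indicator B y \<partial>PiM J (\<lambda>_. M))"
    proof (rule nn_integral_mono)
      fix y assume y: "y \<in> space (PiM J (\<lambda>_. M))"
      show "indicator E (merge D J (x,y)) \<le> (indicator B y :: ennreal)"
      proof (cases "merge D J (x,y) \<in> E")
        case True
        have "y \<in> B" unfolding B_def
        proof (intro CollectI conjI ballI y)
          fix p assume p: "p \<in> Epair I"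
          then have "merge D J (x,y) p \<in> Qs (merge D J (x,y) (fst p, fst p)) (merge D J (x,y) (snd p, snd p))"
            using True by (auto simp: E_def)
          moreover have "merge D J (x,y) p = y p" using p OJ DJ by (auto simp: merge_def)
          moreover have "merge D J (x,y) (fst p, fst p) = x (fst p, fst p)"
            "merge D J (x,y) (snd p, snd p) = x (snd p, snd p)"
            using p by (auto simp: merge_def D_def Epair_def)
          ultimately show "y p \<in> Qs (x (fst p, fst p)) (x (snd p, snd p))" by simp
        qed
        then show ?thesis by (simp add: indicator_def)
      qed simp
    qed
    also have "\<dots> = emeasure (PiM J (\<lambda>_. M)) B"
    proof -
      have "B \<in> sets (PiM J (\<lambda>_. M))"
      proof -
        have "B = {y \<in> space (PiM J (\<lambda>_. M)). \<forall>p\<in>Epair I. y p \<in> (\<lambda>p. Qs (x (fst p, fst p)) (x (snd p, snd p))) p}"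
          by (simp add: B_def)
        also have "\<dots> = prod_emb J (\<lambda>_. M) (Epair I) (Pi\<^sub>E (Epair I) (\<lambda>p. Qs (x (fst p, fst p)) (x (snd p, snd p))))"
          unfolding prod_emb_def using OJ by (auto simp: space_PiM Pi_iff) (metis fst_conv snd_conv)
        also have "\<dots> \<in> sets (PiM J (\<lambda>_. M))"
          using OJ fO Qs_borel sM by (intro measurable_prod_emb sets_PiM_I_finite) auto
        finally show ?thesis .
      qed
      then show ?thesis by simp
    qed
    also have "\<dots> = (\<Prod>p\<in>Epair I. emeasure M (Qs (x (fst p, fst p)) (x (snd p, snd p))))"
      unfolding B_def using OJ fO Qs_borel sM by (intro PP.emeasure_PiM_Collect) auto
    also have "\<dots> = ennreal (\<Prod>p\<in>Epair I. measure M (Qs (x (fst p, fst p)) (x (snd p, snd p))))"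
      by (simp add: finite_measure.emeasure_eq_measure[OF fmM] prod_ennreal)
    also have "\<dots> \<le> ennreal (\<Prod>p\<in>Epair I. 1/2)"
      using pb by (intro ennreal_leI prod_mono) auto
    also have "\<dots> = (1/2) ^ card (Epair I)"
    proof -
      have h: "ennreal (1/2) = 1/2" by (subst divide_ennreal[symmetric]) auto
      show ?thesis unfolding h[symmetric] prod_constant by (rule ennreal_power[symmetric]) simp
    qed
    finally show "(\<integral>\<^sup>+y. indicator E (merge D J (x,y)) \<partial>PiM J (\<lambda>_. M)) \<le> (1/2) ^ card (Epair I)" .
  qed
  also have "\<dots> = (1/2) ^ card (Epair I)"
    using PD.prob_space_P[OF fD(1)] by (simp add: prob_space.emeasure_space_1)
  finally show ?thesis unfolding E_def .
qed


lemma pair_bound: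
  fixes g :: "real \<Rightarrow> real"
  assumes gm: "g \<in> borel_measurable borel" and noninc: "antimono_on {0..1} g"
    and P: "prob_space (density lborel (\<lambda>x. ennreal (g x)))"
  shows "measure (density lborel (\<lambda>x. ennreal (g x))) (Qs u v) \<le> 1/2"
proof (cases "u \<in> {0..1} \<and> v \<in> {0..1}")
  case True
  show ?thesis
  proof (cases "u \<le> v")
    case uv: True
    have "Qs u v = {(u+v)/2..v}" using True uv by (auto simp: Qs_def)
    then show ?thesis using pair_bound0[OF gm noninc P _ _ uv] True by simp
  next
    case False
    then have vu: "v \<le> u" by simp
    have "Qs u v = {(v+u)/2..u}" using True vu by (auto simp: Qs_def)
    then show ?thesis using pair_bound0[OF gm noninc P _ _ vu] True by simp
  qed
next
  case False
  then have "Qs u v = {}" by (auto simp: Qs_def)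
  then show ?thesis by simp
qed

lemma supp2:
  fixes f :: "nat \<Rightarrow> nat \<Rightarrow> real"
  assumes ij: "i \<noteq> j" and sym: "f j i = f i j" and gi: "f i j > f i i" and gj: "f i j > f j j"
  shows "supports_local_eq f {i,j}"
proof -
  define a where "a = f i j - f i i"
  define b where "b = f i j - f j j"
  have a: "a > 0" and b: "b > 0" using gi gj by (auto simp: a_def b_def)
  define p where "p k = (if k = i then b / (a+b) else a / (a+b))" for k
  have "(\<forall>k\<in>{i,j}. p k > 0)" using a b ij by (auto simp: p_def)
  moreover have "(\<Sum>k\<in>{i,j}. p k) = 1" proof -
    have "a + b \<noteq> 0" using a b by simp
    have "(\<Sum>k\<in>{i,j}. p k) = b/(a+b) + a/(a+b)" using ij by (simp add: p_def)
    also have "\<dots> = (b+a)/(a+b)" by (rule add_divide_distrib[symmetric])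
    also have "\<dots> = 1" using \<open>a+b \<noteq> 0\<close> by (simp add: add.commute)
    finally show ?thesis .
  qed
  moreover have "\<exists>c. \<forall>k\<in>{i,j}. (\<Sum>l\<in>{i,j}. f k l * p l) = c"
  proof (rule exI[of _ "f i i * p i + f i j * p j"], intro ballI)
    fix k assume k: "k \<in> {i,j}"
    have "f j i * p i + f j j * p j = f i i * p i + f i j * p j"
      using a b ij unfolding p_def sym
      by (simp add: field_simps a_def b_def)
    then show "(\<Sum>l\<in>{i,j}. f k l * p l) = f i i * p i + f i j * p j" using k ij by auto
  qed
  moreover have "\<forall>x :: nat \<Rightarrow> real. (\<Sum>k\<in>{i,j}. x k) = 0 \<longrightarrow> (\<Sum>k\<in>{i,j}. \<Sum>l\<in>{i,j}. f k l * x k * x l) \<le> 0"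
  proof (intro allI impI)
    fix x :: "nat \<Rightarrow> real" assume "(\<Sum>k\<in>{i,j}. x k) = 0"
    then have xj: "x j = - x i" using ij by simp
    have "(\<Sum>k\<in>{i,j}. \<Sum>l\<in>{i,j}. f k l * x k * x l) = (x i * x i) * (f i i + f j j - 2 * f i j)"
      using ij by (simp add: xj sym algebra_simps)
    also have "\<dots> \<le> 0" using gi gj by (intro mult_nonneg_nonpos) auto
    finally show "(\<Sum>k\<in>{i,j}. \<Sum>l\<in>{i,j}. f k l * x k * x l) \<le> 0" .
  qed
  moreover have "card {i,j} \<ge> 2" using ij by simp
  ultimately show ?thesis unfolding supports_local_eq_def by blast
qed

lemma card_Epair:
  assumes "finite I"
  shows "2 * card (Epair I) + card I = card I * card I"
proof -
  have "I \<times> I = (Epair I \<union> prod.swap ` Epair I) \<union> (\<lambda>i. (i,i)) ` I"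
    by (auto simp: Epair_def image_iff)
  moreover have fE: "finite (Epair I)"
    unfolding Epair_def by (rule finite_subset[OF _ finite_cartesian_product[OF assms assms]]) auto
  moreover have "card (Epair I \<union> prod.swap ` Epair I) = card (Epair I) + card (prod.swap ` Epair I)"
    using fE by (intro card_Un_disjoint) (auto simp: Epair_def)
  moreover have "card (prod.swap ` Epair I) = card (Epair I)" by (simp add: card_image)
  moreover have "card ((Epair I \<union> prod.swap ` Epair I) \<union> (\<lambda>i. (i,i)) ` I)
     = card (Epair I \<union> prod.swap ` Epair I) + card ((\<lambda>i. (i,i)) ` I)"
    using fE assms by (intro card_Un_disjoint) (auto simp: Epair_def)
  moreover have "card ((\<lambda>i. (i,i)) ` I) = card I" by (rule card_image) (auto simp: inj_on_def)
  ultimately have "card (I \<times> I) = 2 * card (Epair I) + card I" by simp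
  then show ?thesis by (simp add: card_cartesian_product)
qed


lemma fact_ev: "eventually (\<lambda>r. (C::real) ^ r \<le> fact r) sequentially"
proof -
  have "(\<lambda>r. inverse (fact r) * C ^ r) \<longlonglongrightarrow> 0"
    by (rule summable_LIMSEQ_zero[OF summable_exp])
  then have "eventually (\<lambda>r. inverse (fact r) * C ^ r < 1) sequentially"
    by (rule order_tendstoD(2)) simp
  then show ?thesis
  proof eventually_elim
    case (elim r)
    have "0 < (fact r :: real)" by simp
    then show ?case using elim by (simp add: field_simps)
  qed
qed

lemma main_ineq:
  fixes n r c :: nat and a :: real
  assumes a: "a > 0" and n: "n \<ge> 1" and r: "2 * log 2 n \<le> r" and c: "2*c + r = r*r"
    and f: "(2 powr ((a+1)/2)) ^ r \<le> fact r"
  shows "real (n choose r) * (1/2)^c \<le> real n powr (-a)"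
proof -
  define N where "N = real n"
  have N: "N > 0" using n by (simp add: N_def)
  have h1: "real (n choose r) * fact r \<le> N ^ r"
  proof -
    have "(n choose r) * fact r \<le> n ^ r" by (rule binomial_fact_pow)
    then have "real ((n choose r) * fact r) \<le> real (n ^ r)" by (rule of_nat_mono)
    then show ?thesis by (simp add: N_def)
  qed
  have h2: "N \<le> 2 powr (real r / 2)"
  proof -
    have "N = 2 powr (log 2 N)" using N by simp
    also have "\<dots> \<le> 2 powr (real r / 2)" using r by (intro powr_mono) (auto simp: N_def)
    finally show ?thesis .
  qed
  have h3: "N ^ r \<le> 2 powr (real r * (real r / 2))"
  proof -
    have "N ^ r \<le> (2 powr (real r / 2)) ^ r" using h2 N by (intro power_mono) auto
    also have "\<dots> = 2 powr (real r * (real r / 2))" by (simp add: powr_power)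
    finally show ?thesis .
  qed
  have h4: "(1/2::real) ^ c = 2 powr (- real c)"
    by (simp add: powr_minus powr_realpow power_one_over inverse_eq_divide)
  have h5: "N powr a \<le> 2 powr (a * (real r / 2))"
  proof -
    have "N powr a \<le> (2 powr (real r / 2)) powr a" using h2 N a by (intro powr_mono2) auto
    also have "\<dots> = 2 powr (a * (real r / 2))" by (simp add: powr_powr mult.commute)
    finally show ?thesis .
  qed
  have cr: "real r * (real r / 2) - real c = real r / 2"
  proof -
    have "real (2*c + r) = real (r*r)" using c by simp
    then show ?thesis by (simp add: field_simps)
  qed
  have fp: "(0::real) < fact r" by simp
  have "real (n choose r) * (1/2)^c \<le> (N ^ r / fact r) * 2 powr (- real c)"
  proof -
    have "real (n choose r) \<le> N ^ r / fact r" using h1 fp by (simp add: pos_le_divide_eq)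
    then have "real (n choose r) * (1/2)^c \<le> (N ^ r / fact r) * (1/2)^c" by (rule mult_right_mono) simp
    then show ?thesis by (simp only: h4)
  qed
  also have "\<dots> \<le> (2 powr (real r * (real r / 2)) / fact r) * 2 powr (- real c)"
    using h3 fp by (intro mult_right_mono divide_right_mono) auto
  also have "\<dots> = 2 powr (real r / 2) / fact r"
  proof -
    have "2 powr (real r * (real r / 2)) / fact r * 2 powr (- real c)
        = 2 powr (real r * (real r / 2) + - real c) / fact r" by (simp only: powr_add) simp
    also have "real r * (real r / 2) + - real c = real r / 2" using cr by simp
    finally show ?thesis .
  qed
  also have "\<dots> \<le> N powr (-a)"
  proof -
    have "2 powr (real r / 2) * N powr a \<le> 2 powr (real r / 2) * 2 powr (a * (real r / 2))"
      using h5 by (intro mult_left_mono) auto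
    also have "\<dots> = (2 powr ((a+1)/2)) ^ r"
      by (simp add: powr_power powr_add[symmetric] field_simps)
    also have "\<dots> \<le> fact r" by (rule f)
    finally have "2 powr (real r / 2) * N powr a \<le> fact r" .
    then show ?thesis using N fp by (simp add: powr_minus field_simps)
  qed
  finally show ?thesis by (simp add: N_def)
qed


lemma main_n:
  fixes g :: "real \<Rightarrow> real" and n r :: nat
  assumes supp: "\<forall>x. x \<notin> {0..1} \<longrightarrow> g x = 0"
    and gm: "g \<in> borel_measurable borel" and noninc: "antimono_on {0..1} g"
    and P: "prob_space (density lborel (\<lambda>x. ennreal (g x)))"
    and r: "r = r_n n" and r3: "r \<ge> 3"
  shows "\<exists>A \<in> sets (entries_space g n). bad_event g n \<subseteq> A \<and>
              measure (entries_space g n) A \<le> real (n choose r) * (1/2) ^ ((r*r - r) div 2)"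
proof -
  define M where "M = density lborel (\<lambda>x. ennreal (g x))"
  define K where "K = entry_idx n"
  have ES: "entries_space g n = PiM K (\<lambda>_. M)" by (simp add: entries_space_def K_def M_def)
  have sM: "sets M = sets borel" by (simp add: M_def)
  have PM: "prob_space M" using P by (simp add: M_def)
  have fK: "finite K" unfolding K_def entry_idx_def
    by (rule finite_subset[of _ "{0..<n} \<times> {0..<n}"]) auto
  have pb: "\<And>u v. measure M (Qs u v) \<le> 1/2" unfolding M_def by (rule pair_bound[OF gm noninc P])
  interpret PK: product_prob_space "\<lambda>_::nat\<times>nat. M" K
    using PM by (simp add: product_prob_space_def product_prob_space_axioms_def product_sigma_finite_def prob_space_imp_sigma_finite)
  have PS: "prob_space (PiM K (\<lambda>_. M))" by (rule prob_space_PiM) (rule PM)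
  define S where "S = {I. I \<subseteq> {0..<n} \<and> card I = r}"
  define E where "E I = {\<omega> \<in> space (PiM K (\<lambda>_. M)). \<forall>p\<in>Epair I. \<omega> p \<in> Qs (\<omega> (fst p, fst p)) (\<omega> (snd p, snd p))}" for I
  define Nk where "Nk k = {\<omega> \<in> space (PiM K (\<lambda>_. M)). \<omega> k \<in> - {0..1}}" for k
  define A where "A = (\<Union>I\<in>S. E I) \<union> (\<Union>k\<in>K. Nk k)"
  have fS: "finite S" unfolding S_def by (rule finite_subset[of _ "Pow {0..<n}"]) auto
  have IK: "\<And>i j. i \<in> I \<Longrightarrow> j \<in> I \<Longrightarrow> i \<le> j \<Longrightarrow> (i,j) \<in> K" if "I \<in> S" for I
    using that by (auto simp: S_def K_def entry_idx_def)
  have fI: "finite I" if "I \<in> S" for I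
    using that unfolding S_def by (auto intro: finite_subset)
  have Es: "E I \<in> sets (PiM K (\<lambda>_. M))" if "I \<in> S" for I
    unfolding E_def by (rule E_sets[OF sM fK IK[OF that] fI[OF that]])
  have Ns: "Nk k \<in> sets (PiM K (\<lambda>_. M))" if "k \<in> K" for k
  proof -
    have "Nk k = (\<lambda>\<omega>. \<omega> k) -` (- {0..1}) \<inter> space (PiM K (\<lambda>_. M))" by (auto simp: Nk_def)
    also have "\<dots> \<in> sets (PiM K (\<lambda>_. M))"
      by (rule measurable_sets[OF measurable_component_singleton[OF that]]) (simp add: sM)
    finally show ?thesis .
  qed
  have As: "A \<in> sets (PiM K (\<lambda>_. M))" unfolding A_def using Es Ns fS fK by (intro sets.Un sets.finite_UN) auto
  have cE: "card (Epair I) = (r*r - r) div 2" if "I \<in> S" for I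
    using card_Epair[OF fI[OF that]] that by (auto simp: S_def)
  have mE: "measure (PiM K (\<lambda>_. M)) (E I) \<le> (1/2) ^ ((r*r - r) div 2)" if "I \<in> S" for I
  proof -
    have "emeasure (PiM K (\<lambda>_. M)) (E I) \<le> (1/2) ^ card (Epair I)"
      unfolding E_def by (rule E_bound[OF PM sM fK IK[OF that] fI[OF that] pb])
    also have "(1/2::ennreal) ^ card (Epair I) = ennreal ((1/2) ^ card (Epair I))"
    proof -
      have h: "ennreal (1/2) = 1/2" by (subst divide_ennreal[symmetric]) auto
      show ?thesis unfolding h[symmetric] by (rule ennreal_power) simp
    qed
    finally show ?thesis using cE[OF that] by (simp add: PK.P.emeasure_eq_measure)
  qed
  have mN: "measure (PiM K (\<lambda>_. M)) (Nk k) = 0" if "k \<in> K" for k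
  proof -
    have "emeasure (PiM K (\<lambda>_. M)) (Nk k) = emeasure M (- {0..1})"
      unfolding Nk_def by (rule PK.emeasure_PiM_Collect_single[OF that]) (simp add: sM)
    also have "\<dots> = (\<integral>\<^sup>+x. ennreal (g x) * indicator (- {0..1}) x \<partial>lborel)"
      unfolding M_def using gm by (subst emeasure_density) auto
    also have "\<dots> = 0"
      using gm supp by (subst nn_integral_0_iff_AE) (auto simp: indicator_def intro!: AE_I2)
    finally show ?thesis by (simp add: PK.P.emeasure_eq_measure)
  qed
  have "measure (PiM K (\<lambda>_. M)) A \<le> measure (PiM K (\<lambda>_. M)) (\<Union>I\<in>S. E I) + measure (PiM K (\<lambda>_. M)) (\<Union>k\<in>K. Nk k)"
    unfolding A_def using Es Ns fS fK
    by (intro measure_subadditive sets.finite_UN PK.P.emeasure_finite) auto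
  also have "measure (PiM K (\<lambda>_. M)) (\<Union>I\<in>S. E I) \<le> (\<Sum>I\<in>S. measure (PiM K (\<lambda>_. M)) (E I))"
    using Es fS by (intro PK.P.finite_measure_subadditive_finite) auto
  also have "\<dots> \<le> (\<Sum>I\<in>S. (1/2) ^ ((r*r - r) div 2))" by (intro sum_mono mE)
  also have "\<dots> = real (n choose r) * (1/2) ^ ((r*r - r) div 2)"
    using n_subsets[of "{0..<n}" r] by (simp add: S_def)
  also have "measure (PiM K (\<lambda>_. M)) (\<Union>k\<in>K. Nk k) \<le> (\<Sum>k\<in>K. measure (PiM K (\<lambda>_. M)) (Nk k))"
    using Ns fK by (intro PK.P.finite_measure_subadditive_finite) auto
  also have "\<dots> = 0" using mN by simp
  finally have mA: "measure (PiM K (\<lambda>_. M)) A \<le> real (n choose r) * (1/2) ^ ((r*r - r) div 2)" by simp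
  have bad: "bad_event g n \<subseteq> A"
  proof
    fix \<omega> assume w: "\<omega> \<in> bad_event g n"
    then have ws: "\<omega> \<in> space (PiM K (\<lambda>_. M))" by (simp add: bad_event_def ES)
    from w obtain I where I: "I \<subseteq> {0..<n}" "card I \<ge> r_n n" "is_Kset (sym_mat \<omega>) I"
      and noJ: "\<And>J. J \<subset> I \<Longrightarrow> card J \<ge> 2 \<Longrightarrow> \<not> supports_local_eq (sym_mat \<omega>) J"
      by (auto simp: bad_event_def)
    show "\<omega> \<in> A"
    proof (cases "\<exists>k\<in>K. \<omega> k \<notin> {0..1}")
      case True
      then show ?thesis using ws by (auto simp: A_def Nk_def)
    next
      case False
      obtain I' where I': "I' \<subseteq> I" "card I' = r" "finite I'"
        using obtain_subset_with_card_n[of r I] I r by auto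
      have I'S: "I' \<in> S" using I' I by (auto simp: S_def)
      have "\<omega> \<in> E I'" unfolding E_def
      proof (intro CollectI conjI ws ballI)
        fix p assume p: "p \<in> Epair I'"
        then obtain i j where ij: "p = (i,j)" "i \<in> I'" "j \<in> I'" "i < j" by (auto simp: Epair_def)
        have inK: "(i,i) \<in> K" "(j,j) \<in> K" using ij I' I by (auto simp: K_def entry_idx_def)
        have u: "\<omega> (i,i) \<in> {0..1}" and v: "\<omega> (j,j) \<in> {0..1}" using False inK by auto
        have sm: "sym_mat \<omega> i j = \<omega> (i,j)" "sym_mat \<omega> j i = \<omega> (i,j)"
          "sym_mat \<omega> i i = \<omega> (i,i)" "sym_mat \<omega> j j = \<omega> (j,j)"
          using ij by (auto simp: sym_mat_def min_def max_def)
        have avg: "(\<omega> (i,i) + \<omega> (j,j)) / 2 \<le> \<omega> (i,j)"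
          using I(3) ij I' sm unfolding is_Kset_def by (metis less_irrefl subsetD)
        have mx: "\<omega> (i,j) \<le> max (\<omega> (i,i)) (\<omega> (j,j))"
        proof (rule ccontr)
          assume "\<not> ?thesis"
          then have gt: "sym_mat \<omega> i j > sym_mat \<omega> i i" "sym_mat \<omega> i j > sym_mat \<omega> j j" using sm by auto
          have sup: "supports_local_eq (sym_mat \<omega>) {i,j}"
            by (rule supp2) (use ij sm gt in auto)
          have sub: "{i,j} \<subset> I"
          proof -
            have "{i,j} \<subseteq> I" using ij I' by auto
            moreover have "card {i,j} < card I" using ij I r r3 by auto
            ultimately show ?thesis by auto
          qed
          show False using noJ[OF sub] sup ij by simp
        qed
        show "\<omega> p \<in> Qs (\<omega> (fst p, fst p)) (\<omega> (snd p, snd p))"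
          using ij u v avg mx by (simp add: Qs_def)
      qed
      then show ?thesis using I'S by (auto simp: A_def)
    qed
  qed
  show ?thesis using As bad mA unfolding ES by blast
qed


lemma two_c: "2 * ((r*r - r) div 2) + r = r * (r::nat)"
proof -
  have e: "r*r - r = r * (r - 1)" by (simp add: diff_mult_distrib2)
  have "even (r * (r - 1))" by (cases "even r") auto
  then have "2 * ((r*r - r) div 2) = r*r - r" unfolding e by simp
  moreover have "r \<le> r * r" by (cases r) auto
  ultimately show ?thesis by simp
qed

theorem corollary2p9:
  fixes g :: "real \<Rightarrow> real"
  assumes supp: "\<forall>x. x \<notin> {0..1} \<longrightarrow> g x = 0"
    and pos: "\<forall>x\<in>{0<..<1}. g x > 0"
    and dens: "(g has_integral 1) {0..1}"
    and noninc: "antimono_on {0..1} g"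
    and diff: "\<forall>x\<in>{0<..<1}. g differentiable (at x)"
    and hazard: "mono_on {0..<1} (\<lambda>x. g x / (1 - cdf_of g x))"
  shows "\<forall>a > 0. \<forall>\<^sub>F n in sequentially.
           \<exists>A \<in> sets (entries_space g n). bad_event g n \<subseteq> A \<and>
              measure (entries_space g n) A \<le> real n powr (- a)"
proof (intro allI impI)
  fix a :: real assume a: "a > 0"
  have gm: "g \<in> borel_measurable borel" using g_meas supp noninc by blast
  have P: "prob_space (density lborel (\<lambda>x. ennreal (g x)))" using g_prob supp pos dens noninc by blast
  obtain R where R: "\<And>r. r \<ge> R \<Longrightarrow> (2 powr ((a+1)/2)) ^ r \<le> fact r"
    using fact_ev[of "2 powr ((a+1)/2)"] unfolding eventually_sequentially by blast
  show "\<forall>\<^sub>F n in sequentially.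
           \<exists>A \<in> sets (entries_space g n). bad_event g n \<subseteq> A \<and>
              measure (entries_space g n) A \<le> real n powr (- a)"
  proof (rule eventually_sequentiallyI[of "max 4 (2^R)"])
    fix n :: nat assume n: "max 4 (2^R) \<le> n"
    define r where "r = r_n n"
    have n4: "real n \<ge> 4" using n by simp
    have nR: "real n \<ge> 2 ^ R"
    proof -
      have "2 ^ R \<le> n" using n by simp
      then have "real (2 ^ R) \<le> real n" by (rule of_nat_mono)
      then show ?thesis by simp
    qed
    have l4: "log 2 (real n) \<ge> 2"
    proof -
      have "log 2 (real n) \<ge> log 2 4" using n4 by (subst log_le_cancel_iff) auto
      moreover have "log 2 (4::real) = 2"
        using log_pow_cancel[of 2 2] by simp
      ultimately show ?thesis by simp
    qed
    have lR: "log 2 (real n) \<ge> real R"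
    proof -
      have "log 2 (real n) \<ge> log 2 (2 ^ R)" using nR n4 by (subst log_le_cancel_iff) auto
      moreover have "log 2 ((2::real) ^ R) = real R"
        using log_pow_cancel[of 2 R] by simp
      ultimately show ?thesis by simp
    qed
    have rge: "2 * log 2 (real n) \<le> real r"
    proof -
      have "0 \<le> \<lceil>2 * log 2 (real n)\<rceil>" using l4 by simp
      then show ?thesis unfolding r_def r_n_def by linarith
    qed
    have r3: "r \<ge> 3" using rge l4 by linarith
    have rR: "r \<ge> R" using rge lR l4 by linarith
    obtain A where A: "A \<in> sets (entries_space g n)" "bad_event g n \<subseteq> A"
      "measure (entries_space g n) A \<le> real (n choose r) * (1/2) ^ ((r*r - r) div 2)"
      using main_n[OF supp gm noninc P r_def r3] by blast
    have B: "real (n choose r) * (1/2) ^ ((r*r - r) div 2) \<le> real n powr (- a)"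
      by (rule main_ineq[OF a _ rge two_c R[OF rR]]) (use n in simp)
    then show "\<exists>A \<in> sets (entries_space g n). bad_event g n \<subseteq> A \<and>
              measure (entries_space g n) A \<le> real n powr (- a)"
      using A(1,2) order_trans[OF A(3) B] by blast
  qed
qed

end
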